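(* Fix $n\ge 1$ and a coalition size $s\in\{1,\ldots,n\}$. Let the periodic canonical increment arrays of size $s$ be listed in some fixed order as $\underline{t}_1,\ldots,\underline{t}_K$ (where $K=|\mathcal{P}(n,s)|$), let $d_j=n\,\pi(\underline{t}_j)/s$, and let $h_1=0$, $h_j=\sum_{i=1}^{j-1}d_i$. Say agent $x\in\{1,\ldots,n\}$ is designated for $\underline{t}_j$ iff $(x-1-h_j)\bmod n<d_j$ (with $\bmod$ taking values in $\{0,\ldots,n-1\}$). Define the allocation of agent $x$ at size $s$ as \[CV_x^s=\{C(x,\underline{t}):\underline{t}\in\mathcal{A}(n,s)\}\cup\{C(x,\underline{t}_j):1\le j\le K,\ x\text{ designated for }\underline{t}_j\}.\] Then for every agent $x\in\{1,\ldots,n\}$, \[\left\lfloor\frac{\binom{n}{s}}{n}\right\rfloor\le|CV_x^s|\le\left\lceil\frac{\binom{n}{s}}{n}\right\rceil,\] so the allocations of any two agents at size $s$ differ by at most one.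
   Context: Agent identifiers are $\{1,\ldots,n\}$, arithmetic on identifiers is modulo $n$ with representatives in $\{1,\ldots,n\}$ (a value $0$ is replaced by $n$). An increment array (IA) of size $s$ for $n$ agents is a tuple $\underline{t}=\langle t_0,\ldots,t_{s-1}\rangle$ of non-negative integers with $\sum t_i=n-s$. Cumulative increments: $\varphi_1=0$, $\varphi_i=\sum_{k=0}^{i-2}(t_k+1)$ for $2\le i\le s+1$. The coalition generated from $x$ is $C(x,\underline{t})=\{x\}\cup\bigcup_{i=2}^{s}\{(x+\varphi_i)\bmod n\}$ (residues in $\{1,\ldots,n\}$). Two IAs of the same size are equivalent ($\approx$) if one is a circular shift of the other; the canonical representative of an equivalence class is its lexicographically smallest member. $\mathcal{E}(n,s)$ is the set of canonical representatives of IAs of size $s$. The period $\pi(\underline{t})$ is the least $p\in\{1,\ldots,s\}$ such that $\underline{t}$ consists of $s/p$ identical consecutive copies of its first $p$ entries. $\mathcal{A}(n,s)=\{\underline{t}\in\mathcal{E}(n,s):\pi(\underline{t})=s\}$ (aperiodic) and $\mathcal{P}(n,s)=\{\underline{t}\in\mathcal{E}(n,s):\pi(\underline{t})<s\}$ (periodic). *)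

theory Defs
  imports Complex_Main
begin

text \<open>Increment arrays are lists of naturals; agents are 1..n.\<close>

definition is_IA :: "nat \<Rightarrow> nat \<Rightarrow> nat list \<Rightarrow> bool" where
  "is_IA n s t \<longleftrightarrow> length t = s \<and> sum_list t = n - s"

definition lex_le :: "nat list \<Rightarrow> nat list \<Rightarrow> bool" where
  "lex_le u v \<longleftrightarrow> u = v \<or> (u, v) \<in> lexord {(a, b). a < b}"

definition ia_equiv :: "nat list \<Rightarrow> nat list \<Rightarrow> bool" where
  "ia_equiv u v \<longleftrightarrow> (\<exists>k. v = rotate k u)"

definition E_set :: "nat \<Rightarrow> nat \<Rightarrow> nat list set" where
  "E_set n s = {t. is_IA n s t \<and> (\<forall>u. is_IA n s u \<and> ia_equiv t u \<longrightarrow> lex_le t u)}"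

definition period :: "nat list \<Rightarrow> nat" where
  "period t = (LEAST p. 1 \<le> p \<and> p \<le> length t \<and> p dvd length t \<and>
                 t = concat (replicate (length t div p) (take p t)))"

definition A_set :: "nat \<Rightarrow> nat \<Rightarrow> nat list set" where
  "A_set n s = {t \<in> E_set n s. period t = s}"

definition P_set :: "nat \<Rightarrow> nat \<Rightarrow> nat list set" where
  "P_set n s = {t \<in> E_set n s. period t < s}"

text \<open>Cumulative increments phi_i (i >= 1), phi_1 = 0.\<close>
definition phi :: "nat list \<Rightarrow> nat \<Rightarrow> nat" where
  "phi t i = (\<Sum>k<i - 1. t ! k + 1)"

definition modrep :: "nat \<Rightarrow> nat \<Rightarrow> nat" where
  "modrep n a = (if a mod n = 0 then n else a mod n)"

definition coalition :: "nat \<Rightarrow> nat \<Rightarrow> nat list \<Rightarrow> nat set" where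
  "coalition n x t = {x} \<union> (\<lambda>i. modrep n (x + phi t i)) ` {2..length t}"

text \<open>d_j and h_j for an enumeration ts (0-indexed) of the periodic arrays.\<close>
definition dval :: "nat \<Rightarrow> nat \<Rightarrow> nat list \<Rightarrow> nat" where
  "dval n s t = n * period t div s"

definition hval :: "nat \<Rightarrow> nat \<Rightarrow> nat list list \<Rightarrow> nat \<Rightarrow> nat" where
  "hval n s ts j = (\<Sum>i<j. dval n s (ts ! i))"

definition designated :: "nat \<Rightarrow> nat \<Rightarrow> nat list list \<Rightarrow> nat \<Rightarrow> nat \<Rightarrow> bool" where
  "designated n s ts j x \<longleftrightarrow>
     (int x - 1 - int (hval n s ts j)) mod int n < int (dval n s (ts ! j))"

definition CV :: "nat \<Rightarrow> nat \<Rightarrow> nat list list \<Rightarrow> nat \<Rightarrow> nat set set" where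
  "CV n s ts x = {coalition n x t | t. t \<in> A_set n s}
      \<union> {coalition n x (ts ! j) | j. j < length ts \<and> designated n s ts j x}"

end

theory Submission
  imports Defs "HOL-Library.List_Lexorder" "HOL-Number_Theory.Cong"
begin


lemma rotate_concat_rep: "rotate (length b) (concat (replicate k b)) = concat (replicate k b)"
proof (cases k)
  case 0 then show ?thesis by simp
next
  case (Suc k')
  have "concat (replicate k' b) @ b = b @ concat (replicate k' b)"
    by (induction k') auto
  then show ?thesis using Suc by (simp add: rotate_append)
qed

lemma comm_rep:
  assumes "length xs = m" "0 < m" "xs @ ys = ys @ xs" "m dvd length ys"
  shows "ys = concat (replicate (length ys div m) xs)"
  using assms
proof (induction "length ys" arbitrary: ys rule: less_induct)
  case less
  show ?case
  proof (cases "ys = []")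
    case True then show ?thesis by simp
  next
    case False
    then have "length ys \<ge> m" using less.prems(2,4) by (metis dvd_imp_le length_greater_0_conv)
    have "take m (xs @ ys) = take m (ys @ xs)" using less.prems(3) by simp
    then have tk: "take m ys = xs" using less.prems(1) \<open>length ys \<ge> m\<close> by simp
    define ys' where "ys' = drop m ys"
    have ys: "ys = xs @ ys'" unfolding ys'_def using tk by (metis append_take_drop_id)
    have "xs @ xs @ ys' = xs @ ys' @ xs" using less.prems(3) ys by simp
    then have c: "xs @ ys' = ys' @ xs" by simp
    have l: "length ys' < length ys" using ys less.prems by simp
    have d: "m dvd length ys'" using less.prems ys by (simp add: dvd_diff_nat)
    have "ys' = concat (replicate (length ys' div m) xs)"
      using less.hyps[OF l less.prems(1,2) c d] .
    moreover have "length ys div m = Suc (length ys' div m)"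
      using ys less.prems(1,2) d by (auto elim!: dvdE)
    ultimately show ?thesis using ys by simp
  qed
qed

lemma rot_inj:
  assumes "rotate a u = rotate a v" "length u = length v"
  shows "u = v"
proof (cases "length u = 0")
  case True then show ?thesis using assms by simp
next
  case False
  define L where "L = length u"
  have "(L - a mod L + a) mod L = 0"
  proof -
    have r: "a mod L < L" using False L_def by simp
    have q: "L * (a div L) + a mod L = a" by (rule mult_div_mod_eq)
    have e: "L * Suc (a div L) = L + L * (a div L)" by simp
    have "L - a mod L + a = L * (Suc (a div L))" using r q e by linarith
    then show ?thesis by simp
  qed
  then have 1: "rotate (L - a mod L) (rotate a u) = u" "rotate (L - a mod L) (rotate a v) = v"
    using assms(2) L_def by (simp_all add: rotate_rotate)
  have "u = rotate (L - a mod L) (rotate a u)" using 1 by simp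
  also have "\<dots> = rotate (L - a mod L) (rotate a v)" using assms(1) by simp
  also have "\<dots> = v" using 1 by simp
  finally show ?thesis .
qed

lemma rot_mult: "rotate k t = t \<Longrightarrow> rotate (k * c) t = t"
proof (induction c)
  case 0 then show ?case by simp
next
  case (Suc c)
  have "rotate (k * Suc c) t = rotate k (rotate (k * c) t)"
    by (simp add: rotate_rotate)
  then show ?case using Suc by simp
qed

lemma rot_mod: "rotate m t = t \<Longrightarrow> rotate k t = rotate (k mod m) t"
proof -
  assume a: "rotate m t = t"
  have "rotate k t = rotate (k mod m) (rotate (m * (k div m)) t)"
    by (simp add: rotate_rotate)
  then show ?thesis using rot_mult[OF a] by simp
qed

definition perpred :: "nat list \<Rightarrow> nat \<Rightarrow> bool" where
  "perpred t p \<longleftrightarrow> 1 \<le> p \<and> p \<le> length t \<and> p dvd length t \<and>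
                 t = concat (replicate (length t div p) (take p t))"

lemma period_alt: "period t = (LEAST p. perpred t p)"
  unfolding period_def perpred_def by simp

lemma perpred_len: "t \<noteq> [] \<Longrightarrow> perpred t (length t)"
  unfolding perpred_def by (simp add: Suc_leI)

lemma period_prop: "t \<noteq> [] \<Longrightarrow> perpred t (period t)"
  unfolding period_alt by (rule LeastI[of "perpred t" "length t", OF perpred_len])

lemma period_rot: assumes "t \<noteq> []" shows "rotate (period t) t = t"
proof -
  have p: "perpred t (period t)" using period_prop[OF assms] .
  then have "length (take (period t) t) = period t" unfolding perpred_def by simp
  then show ?thesis using p rotate_concat_rep[of "take (period t) t" "length t div period t"]
    unfolding perpred_def by metis
qed

lemma rot_perpred:
  assumes "1 \<le> m" "m \<le> length t" "m dvd length t" "rotate m t = t"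
  shows "perpred t m"
proof (cases "m = length t")
  case True
  have "t \<noteq> []" using assms by auto
  then show ?thesis using perpred_len True by simp
next
  case False
  then have ml: "m < length t" using assms by simp
  define xs where "xs = take m t"
  define ys where "ys = drop m t"
  have "rotate m t = ys @ xs" using ml by (simp add: rotate_drop_take xs_def ys_def)
  then have c: "xs @ ys = ys @ xs" using assms(4) xs_def ys_def by simp
  have lx: "length xs = m" using ml xs_def by simp
  have ly: "length ys = length t - m" using ys_def by simp
  have d: "m dvd length ys" using ly assms(3) by (simp add: dvd_diff_nat)
  have yseq: "ys = concat (replicate (length ys div m) xs)"
    using comm_rep[OF lx _ c d] assms(1) by simp
  obtain k where k: "length t = m * k" using assms(3) by (auto elim!: dvdE)
  have k1: "k \<ge> 1" using k ml by (cases k) auto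
  have "length ys = m * (k - 1)" using ly k by (simp add: diff_mult_distrib2)
  then have "length ys div m = k - 1" using assms(1) by simp
  moreover have "length t div m = k" using k assms(1) by simp
  ultimately have "length t div m = Suc (length ys div m)" using k1 by simp
  moreover have "t = xs @ ys" by (simp add: xs_def ys_def)
  ultimately have "t = concat (replicate (length t div m) xs)"
    using yseq by simp
  then show ?thesis using assms unfolding perpred_def xs_def by simp
qed

lemma period_least: "perpred t m \<Longrightarrow> period t \<le> m"
  unfolding period_alt by (rule Least_le)

lemma period_ge1: "t \<noteq> [] \<Longrightarrow> 1 \<le> period t"
  using period_prop perpred_def by blast

lemma period_le: "t \<noteq> [] \<Longrightarrow> period t \<le> length t"
  using period_prop perpred_def by blast

lemma period_dvd_len: "t \<noteq> [] \<Longrightarrow> period t dvd length t"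
  using period_prop perpred_def by blast

lemma fixed_dvd:
  assumes ne: "t \<noteq> []" and k: "rotate k t = t"
  shows "period t dvd k"
proof -
  define m0 where "m0 = (LEAST m. 0 < m \<and> rotate m t = t)"
  have ex: "0 < period t \<and> rotate (period t) t = t" using period_ge1[OF ne] period_rot[OF ne] by simp
  have m0p: "0 < m0 \<and> rotate m0 t = t" unfolding m0_def by (rule LeastI[of "\<lambda>m. 0 < m \<and> rotate m t = t", OF ex])
  have m0min: "\<And>m. 0 < m \<Longrightarrow> rotate m t = t \<Longrightarrow> m0 \<le> m"
    unfolding m0_def by (simp add: Least_le)
  have modfix: "\<And>j. rotate j t = t \<Longrightarrow> j mod m0 = 0"
  proof (rule ccontr)
    fix j assume j: "rotate j t = t" "j mod m0 \<noteq> 0"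
    have "rotate (j mod m0) t = t" using rot_mod[of m0 t j] m0p j by simp
    then have "m0 \<le> j mod m0" using m0min j by simp
    moreover have "j mod m0 < m0" using m0p by simp
    ultimately show False by simp
  qed
  have "length t mod m0 = 0" using modfix by simp
  then have "m0 dvd length t" by auto
  moreover have "m0 \<le> length t" using ne m0min by simp
  ultimately have "perpred t m0" using rot_perpred m0p by (simp add: Suc_leI)
  then have "period t \<le> m0" by (rule period_least)
  moreover have "m0 \<le> period t" using m0min ex by simp
  ultimately have "period t = m0" by simp
  then show ?thesis using modfix[OF k] by auto
qed

definition orb :: "nat list \<Rightarrow> nat list set" where
  "orb t = range (\<lambda>k. rotate k t)"

lemma orb_card: assumes ne: "t \<noteq> []" shows "card (orb t) = period t"
proof -
  let ?p = "period t"
  have "orb t = (\<lambda>k. rotate k t) ` {0..<?p}"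
  proof
    show "orb t \<subseteq> (\<lambda>k. rotate k t) ` {0..<?p}"
    proof
      fix u assume "u \<in> orb t"
      then obtain k where u: "u = rotate k t" unfolding orb_def by auto
      then have "u = rotate (k mod ?p) t" using rot_mod[OF period_rot[OF ne]] by simp
      moreover have "k mod ?p < ?p" using period_ge1[OF ne] by simp
      ultimately show "u \<in> (\<lambda>k. rotate k t) ` {0..<?p}" by auto
    qed
  qed (auto simp: orb_def)
  moreover have "inj_on (\<lambda>k. rotate k t) {0..<?p}"
  proof (rule inj_onI)
    fix i j assume ij: "i \<in> {0..<?p}" "j \<in> {0..<?p}" "rotate i t = rotate j t"
    show "i = j"
    proof (rule ccontr)
      assume "i \<noteq> j"
      then consider "i < j" | "j < i" by linarith
      then show False
      proof cases
        case 1
        have "rotate i (rotate (j - i) t) = rotate i t" using ij 1 by (simp add: rotate_rotate)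
        then have "rotate (j - i) t = t" using rot_inj[of i "rotate (j - i) t" t] by simp
        then have "?p dvd (j - i)" using fixed_dvd ne by blast
        then show False using dvd_imp_le[of ?p "j - i"] 1 ij by auto
      next
        case 2
        have "rotate j (rotate (i - j) t) = rotate j t" using ij 2 by (simp add: rotate_rotate)
        then have "rotate (i - j) t = t" using rot_inj[of j "rotate (i - j) t" t] by simp
        then have "?p dvd (i - j)" using fixed_dvd ne by blast
        then show False using dvd_imp_le[of ?p "i - j"] 2 ij by auto
      qed
    qed
  qed
  ultimately show ?thesis by (simp add: card_image)
qed

lemma rot_back: "\<exists>j. rotate j (rotate k t) = t"
proof (cases "length t = 0")
  case True then show ?thesis by simp
next
  case False
  define L where "L = length t"
  have r: "k mod L < L" using False L_def by simp
  have q: "L * (k div L) + k mod L = k" by (rule mult_div_mod_eq)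
  have e: "L * Suc (k div L) = L + L * (k div L)" by simp
  have "L - k mod L + k = L * (Suc (k div L))" using r q e by linarith
  then have "(L - k mod L + k) mod L = 0" by simp
  then have "rotate (L - k mod L) (rotate k t) = t" using L_def by (simp add: rotate_rotate)
  then show ?thesis by blast
qed

lemma orb_self: "t \<in> orb t"
  unfolding orb_def by (metis rangeI rotate0 id_apply)

lemma orb_sub: "u \<in> orb t \<Longrightarrow> orb u \<subseteq> orb t"
  unfolding orb_def by (auto simp: rotate_rotate)

lemma orb_eq: "u \<in> orb t \<Longrightarrow> orb u = orb t"
proof -
  assume u: "u \<in> orb t"
  then obtain k where k: "u = rotate k t" unfolding orb_def by auto
  obtain j where "rotate j u = t" using rot_back k by blast
  then have "t \<in> orb u" unfolding orb_def by auto
  then show ?thesis using orb_sub u by blast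
qed

lemma lex_le_eq: "lex_le u v \<longleftrightarrow> u \<le> v"
  unfolding lex_le_def list_le_def list_less_def by auto

lemma sum_list_rotate': "sum_list (rotate k t) = sum_list (t::nat list)"
proof -
  let ?m = "k mod length t"
  have "sum_list (rotate k t) = sum_list (drop ?m t) + sum_list (take ?m t)"
    by (simp only: rotate_drop_take sum_list_append)
  also have "\<dots> = sum_list (take ?m t @ drop ?m t)" by (simp only: sum_list_append add.commute)
  also have "\<dots> = sum_list t" by (simp only: append_take_drop_id)
  finally show ?thesis .
qed

lemma is_IA_rotate: "is_IA n s t \<Longrightarrow> is_IA n s (rotate k t)"
  unfolding is_IA_def by (simp add: sum_list_rotate')

lemma is_IA_orb: "is_IA n s t \<Longrightarrow> u \<in> orb t \<Longrightarrow> is_IA n s u"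
  unfolding orb_def using is_IA_rotate by auto

lemma E_char: "E_set n s = {t. is_IA n s t \<and> (\<forall>u\<in>orb t. t \<le> u)}"
  unfolding E_set_def ia_equiv_def lex_le_eq orb_def using is_IA_rotate by blast

definition IA :: "nat \<Rightarrow> nat \<Rightarrow> nat list set" where
  "IA n s = {t. is_IA n s t}"

lemma finite_IA: "finite (IA n s)"
proof -
  have "IA n s \<subseteq> {xs. set xs \<subseteq> {..n} \<and> length xs = s}"
    unfolding IA_def is_IA_def using member_le_sum_list by fastforce
  moreover have "finite {xs. set xs \<subseteq> {..n} \<and> length xs = s}"
    by (rule finite_lists_length_eq) simp
  ultimately show ?thesis by (rule finite_subset)
qed

lemma finite_orb: "finite (orb t)"
proof -
  have "orb t \<subseteq> {xs. set xs \<subseteq> set t \<and> length xs = length t}"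
    unfolding orb_def by auto
  moreover have "finite {xs. set xs \<subseteq> set t \<and> length xs = length t}"
    by (rule finite_lists_length_eq) simp
  ultimately show ?thesis by (rule finite_subset)
qed

lemma E_sub: "E_set n s \<subseteq> IA n s"
  unfolding E_char IA_def by auto

lemma IA_partition: "IA n s = (\<Union>t\<in>E_set n s. orb t)"
proof
  show "(\<Union>t\<in>E_set n s. orb t) \<subseteq> IA n s"
    unfolding E_char IA_def using is_IA_orb by auto
next
  show "IA n s \<subseteq> (\<Union>t\<in>E_set n s. orb t)"
  proof
    fix u assume u: "u \<in> IA n s"
    define c where "c = Min (orb u)"
    have cin: "c \<in> orb u" unfolding c_def using finite_orb orb_self by (metis Min_in empty_iff)
    have oc: "orb c = orb u" using orb_eq[OF cin] .
    have "is_IA n s c" using u cin is_IA_orb unfolding IA_def by auto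
    moreover have "\<forall>v\<in>orb c. c \<le> v" using oc finite_orb unfolding c_def by auto
    ultimately have "c \<in> E_set n s" unfolding E_char by auto
    moreover have "u \<in> orb c" using oc orb_self by auto
    ultimately show "u \<in> (\<Union>t\<in>E_set n s. orb t)" by auto
  qed
qed

lemma E_disj: assumes "t1 \<in> E_set n s" "t2 \<in> E_set n s" "t1 \<noteq> t2"
  shows "orb t1 \<inter> orb t2 = {}"
proof (rule ccontr)
  assume "orb t1 \<inter> orb t2 \<noteq> {}"
  then obtain u where "u \<in> orb t1" "u \<in> orb t2" by auto
  then have "orb t1 = orb t2" using orb_eq by metis
  then have "t2 \<in> orb t1" "t1 \<in> orb t2" using orb_self by auto
  then have "t1 \<le> t2" "t2 \<le> t1" using assms(1,2) unfolding E_char by auto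
  then show False using assms(3) by simp
qed

lemma card_IA_sum: assumes "1 \<le> s"
  shows "card (IA n s) = (\<Sum>t\<in>E_set n s. period t)"
proof -
  have fE: "finite (E_set n s)" using finite_subset[OF E_sub finite_IA] .
  have "card (IA n s) = (\<Sum>t\<in>E_set n s. card (orb t))"
    unfolding IA_partition
    by (rule card_UN_disjoint[OF fE]) (auto simp: finite_orb dest: E_disj)
  also have "\<dots> = (\<Sum>t\<in>E_set n s. period t)"
  proof (rule sum.cong[OF refl])
    fix t assume "t \<in> E_set n s"
    then have "t \<noteq> []" using assms unfolding E_char is_IA_def by auto
    then show "card (orb t) = period t" by (rule orb_card)
  qed
  finally show ?thesis .
qed

lemma compositions:
  "card {xs::nat list. length xs = Suc k \<and> sum_list xs = m} = (m + k) choose k"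
proof (induction k arbitrary: m)
  case 0
  have "{xs::nat list. length xs = Suc 0 \<and> sum_list xs = m} = {[m]}"
    by (auto simp: length_Suc_conv)
  then show ?case by simp
next
  case (Suc k)
  have eq: "{xs::nat list. length xs = Suc (Suc k) \<and> sum_list xs = m} =
     (\<Union>a\<in>{..m}. (\<lambda>xs. a # xs) ` {xs. length xs = Suc k \<and> sum_list xs = m - a})"
  proof
    show "{xs::nat list. length xs = Suc (Suc k) \<and> sum_list xs = m} \<subseteq>
      (\<Union>a\<in>{..m}. (\<lambda>xs. a # xs) ` {xs. length xs = Suc k \<and> sum_list xs = m - a})"
    proof
      fix xs :: "nat list" assume "xs \<in> {xs. length xs = Suc (Suc k) \<and> sum_list xs = m}"
      then obtain a ys where "xs = a # ys" "length ys = Suc k" "a + sum_list ys = m"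
        by (auto simp: length_Suc_conv)
      then show "xs \<in> (\<Union>a\<in>{..m}. (\<lambda>xs. a # xs) ` {xs. length xs = Suc k \<and> sum_list xs = m - a})"
        by (intro UN_I[of a]) auto
    qed
  qed auto
  have "card {xs::nat list. length xs = Suc (Suc k) \<and> sum_list xs = m} =
     (\<Sum>a\<le>m. card ((\<lambda>xs. a # xs) ` {xs::nat list. length xs = Suc k \<and> sum_list xs = m - a}))"
    unfolding eq
  proof (rule card_UN_disjoint)
    show "\<forall>i\<in>{..m}. finite ((\<lambda>xs. i # xs) ` {xs::nat list. length xs = Suc k \<and> sum_list xs = m - i})"
    proof
      fix i
      have "{xs::nat list. length xs = Suc k \<and> sum_list xs = m - i} \<subseteq> {xs. set xs \<subseteq> {..m} \<and> length xs = Suc k}"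
        using member_le_sum_list by fastforce
      moreover have "finite {xs::nat list. set xs \<subseteq> {..m} \<and> length xs = Suc k}"
        by (rule finite_lists_length_eq) simp
      ultimately show "finite ((\<lambda>xs. i # xs) ` {xs::nat list. length xs = Suc k \<and> sum_list xs = m - i})"
        using finite_subset by blast
    qed
  qed auto
  also have "\<dots> = (\<Sum>a\<le>m. (m - a + k) choose k)"
    by (rule sum.cong[OF refl]) (simp add: card_image Suc.IH)
  also have "\<dots> = (\<Sum>a\<le>m. (k + a) choose a)"
  proof -
    have "(\<Sum>a\<le>m. (m - a + k) choose k) = (\<Sum>a\<le>m. (a + k) choose k)"
      by (rule sum.reindex_bij_witness[of _ "\<lambda>a. m - a" "\<lambda>a. m - a"]) auto
    also have "\<dots> = (\<Sum>a\<le>m. (k + a) choose a)"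
      by (rule sum.cong[OF refl]) (metis add.commute binomial_symmetric le_add2 add_diff_cancel_right')
    finally show ?thesis .
  qed
  also have "\<dots> = Suc (k + m) choose m" by (rule sum_choose_lower)
  also have "\<dots> = (m + Suc k) choose Suc k"
    by (metis add.commute add_Suc_right binomial_symmetric le_add2 add_diff_cancel_right' add_Suc)
  finally show ?case .
qed

lemma card_IA: assumes "1 \<le> s" "s \<le> n" shows "card (IA n s) = (n - 1) choose (s - 1)"
proof -
  obtain k where k: "s = Suc k" using assms by (cases s) auto
  have "card (IA n s) = card {xs::nat list. length xs = Suc k \<and> sum_list xs = n - s}"
    unfolding IA_def is_IA_def k by simp
  also have "\<dots> = (n - s + k) choose k" by (rule compositions)
  also have "n - s + k = n - 1" using k assms by simp
  finally show ?thesis using k by simp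
qed

lemma sum_list_concat_rep: "sum_list (concat (replicate k b)) = k * sum_list (b::nat list)"
  by (induction k) auto

lemma dval_mult:
  assumes "is_IA n s t" "1 \<le> s" "s \<le> n"
  shows "dval n s t * s = n * period t"
proof -
  have len: "length t = s" using assms unfolding is_IA_def by simp
  have ne: "t \<noteq> []" using len assms by auto
  define p where "p = period t"
  define b where "b = take p t"
  define q where "q = s div p"
  have pp: "perpred t p" using period_prop[OF ne] p_def by simp
  have tq: "t = concat (replicate q b)" using pp len unfolding perpred_def q_def b_def by simp
  have sq: "s = q * p" using pp len unfolding perpred_def q_def by simp
  have "n - s = q * sum_list b" using tq assms(1) sum_list_concat_rep unfolding is_IA_def by metis
  then have "n = s + q * sum_list b" using assms(3) by simp
  then have np: "n * p = s * (p + sum_list b)" using sq by (simp add: algebra_simps)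
  have "dval n s t = p + sum_list b" unfolding dval_def p_def[symmetric] np using assms(2) by simp
  then show ?thesis using np p_def by simp
qed

lemma sum_dval_E:
  assumes "1 \<le> s" "s \<le> n"
  shows "(\<Sum>t\<in>E_set n s. dval n s t) = n choose s"
proof -
  have "(\<Sum>t\<in>E_set n s. dval n s t) * s = (\<Sum>t\<in>E_set n s. dval n s t * s)"
    by (simp add: sum_distrib_right)
  also have "\<dots> = (\<Sum>t\<in>E_set n s. n * period t)"
    by (rule sum.cong[OF refl]) (use assms dval_mult in \<open>auto simp: E_char\<close>)
  also have "\<dots> = n * card (IA n s)" using card_IA_sum[OF assms(1)] by (simp add: sum_distrib_left)
  also have "\<dots> = n * ((n - 1) choose (s - 1))" using card_IA[OF assms] by simp
  also have "\<dots> = (n choose s) * s"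
  proof -
    obtain n' s' where "n = Suc n'" "s = Suc s'" using assms by (cases n; cases s) auto
    then show ?thesis using Suc_times_binomial_eq[of n' s'] by simp
  qed
  finally show ?thesis using assms(1) by simp
qed

lemma phi_Suc: "1 \<le> i \<Longrightarrow> phi t (Suc i) = phi t i + (t ! (i - 1) + 1)"
proof -
  assume "1 \<le> i"
  then obtain j where "i = Suc j" by (cases i) auto
  then show ?thesis unfolding phi_def by simp
qed

lemma phi_mono: "1 \<le> i \<Longrightarrow> i < j \<Longrightarrow> phi t i < phi t j"
proof (induction j)
  case 0 then show ?case by simp
next
  case (Suc j)
  have "phi t (Suc j) = phi t j + (t ! (j - 1) + 1)" using Suc.prems by (intro phi_Suc) simp
  then show ?case using Suc by (auto simp: less_Suc_eq)
qed

lemma phi_lt: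
  assumes "is_IA n s t" "1 \<le> i" "i \<le> s" "s \<le> n"
  shows "phi t i < n"
proof -
  have len: "length t = s" using assms unfolding is_IA_def by simp
  have A: "phi t i = (\<Sum>k<i - 1. t ! k) + (i - 1)" unfolding phi_def sum.distrib by simp
  have B: "(\<Sum>k<i - 1. t ! k) \<le> (\<Sum>k<s. t ! k)" by (rule sum_mono2) (use assms in auto)
  have C: "(\<Sum>k<s. t ! k) = n - s" using assms(1) len
    unfolding is_IA_def by (simp add: sum_list_sum_nth atLeast0LessThan)
  show ?thesis using A B C assms(2,3,4) by linarith
qed

lemma modrep_mod: "0 < n \<Longrightarrow> modrep n a mod n = a mod n"
  unfolding modrep_def by auto

lemma coal_img:
  assumes "1 \<le> x" "x \<le> n" "1 \<le> length t"
  shows "coalition n x t = (\<lambda>d. modrep n (x + d)) ` (phi t ` {1..length t})"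
proof -
  have "{1..length t} = insert 1 {2..length t}" using assms(3) by auto
  moreover have "modrep n (x + phi t 1) = x"
    using assms unfolding modrep_def phi_def by (cases "x = n") auto
  ultimately show ?thesis unfolding coalition_def by (auto simp: image_image)
qed

lemma coal_inj:
  assumes "is_IA n s t" "is_IA n s t'" "1 \<le> s" "s \<le> n" "1 \<le> x" "x \<le> n"
    and eq: "coalition n x t = coalition n x t'"
  shows "t = t'"
proof -
  have len: "length t = s" "length t' = s" using assms unfolding is_IA_def by auto
  have n0: "0 < n" using assms by simp
  have inj: "inj_on (\<lambda>d. modrep n (x + d)) {0..<n}"
  proof (rule inj_onI)
    fix d1 d2 assume d: "d1 \<in> {0..<n}" "d2 \<in> {0..<n}" "modrep n (x + d1) = modrep n (x + d2)"
    then have "(x + d1) mod n = (x + d2) mod n" using modrep_mod[OF n0] by metis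
    then have "d1 mod n = d2 mod n" using cong_add_lcancel_nat[where a=x and x=d1 and y=d2 and n=n] unfolding cong_def by simp
    then show "d1 = d2" using d by simp
  qed
  have s1: "phi t ` {1..s} \<subseteq> {0..<n}" using phi_lt[OF assms(1)] assms(4) by auto
  have s2: "phi t' ` {1..s} \<subseteq> {0..<n}" using phi_lt[OF assms(2)] assms(4) by auto
  have "(\<lambda>d. modrep n (x + d)) ` (phi t ` {1..s}) = (\<lambda>d. modrep n (x + d)) ` (phi t' ` {1..s})"
    using eq coal_img[of x n t] coal_img[of x n t'] assms len by simp
  then have im: "phi t ` {1..s} = phi t' ` {1..s}" using inj_on_image_eq_iff[OF inj s1 s2] by simp
  have sw: "\<And>u. sorted_wrt (<) (map (phi u) [1..<Suc s])"
    unfolding sorted_wrt_map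
    by (rule sorted_wrt_mono_rel[OF _ sorted_wrt_upt]) (auto intro: phi_mono)
  have meq: "map (phi t) [1..<Suc s] = map (phi t') [1..<Suc s]"
  proof (rule sorted_distinct_set_unique)
    have st: "\<And>u. set (map (phi u) [1..<Suc s]) = phi u ` {1..s}"
      by (simp only: set_map set_upt atLeastLessThanSuc_atLeastAtMost)
    show "set (map (phi t) [1..<Suc s]) = set (map (phi t') [1..<Suc s])" using st im by simp
  qed (use sw strict_sorted_iff in blast)+
  have pe: "\<And>i. 1 \<le> i \<Longrightarrow> i \<le> s \<Longrightarrow> phi t i = phi t' i"
  proof -
    fix i assume i: "1 \<le> i" "i \<le> s"
    have "(map (phi t) [1..<Suc s]) ! (i - 1) = (map (phi t') [1..<Suc s]) ! (i - 1)"
      using meq by (rule arg_cong[where f="\<lambda>xs. xs ! (i - 1)"])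
    then show "phi t i = phi t' i" using i by (simp del: upt_Suc)
  qed
  have init: "\<And>k. k < s - 1 \<Longrightarrow> t ! k = t' ! k"
  proof -
    fix k assume k: "k < s - 1"
    have "phi t (Suc (Suc k)) = phi t (Suc k) + (t ! k + 1)" using phi_Suc[of "Suc k" t] by simp
    moreover have "phi t' (Suc (Suc k)) = phi t' (Suc k) + (t' ! k + 1)" using phi_Suc[of "Suc k" t'] by simp
    moreover have "phi t (Suc (Suc k)) = phi t' (Suc (Suc k))" "phi t (Suc k) = phi t' (Suc k)"
      using pe k by auto
    ultimately show "t ! k = t' ! k" by simp
  qed
  have sums: "(\<Sum>k<s. t ! k) = (\<Sum>k<s. t' ! k)"
    using assms(1,2) len unfolding is_IA_def by (simp add: sum_list_sum_nth atLeast0LessThan)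
  have splt: "\<And>u::nat list. (\<Sum>k<s. u ! k) = (\<Sum>k<s - 1. u ! k) + u ! (s - 1)"
  proof -
    fix u :: "nat list"
    obtain s' where "s = Suc s'" using assms(3) by (cases s) auto
    then show "(\<Sum>k<s. u ! k) = (\<Sum>k<s - 1. u ! k) + u ! (s - 1)" by simp
  qed
  have "(\<Sum>k<s - 1. t ! k) = (\<Sum>k<s - 1. t' ! k)" using init by (intro sum.cong) auto
  then have last: "t ! (s - 1) = t' ! (s - 1)" using sums splt[of t] splt[of t'] by simp
  show ?thesis
  proof (rule nth_equalityI)
    show "length t = length t'" using len by simp
    fix i assume "i < length t"
    then have "i < s - 1 \<or> i = s - 1" using len by auto
    then show "t ! i = t' ! i" using init last by auto
  qed
qed

lemma mod_hit1:
  fixes a y n r :: nat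
  assumes "0 < n" "y < n" "int r = (int y - int a) mod int n"
  shows "(a + r) mod n = y"
proof -
  have "int ((a + r) mod n) = (int a + int r) mod int n" by (simp add: zmod_int)
  also have "\<dots> = (int a + (int y - int a)) mod int n" using assms(3) by (simp add: mod_add_right_eq)
  also have "\<dots> = int y" using assms by simp
  finally show ?thesis by simp
qed

lemma mod_hit2:
  fixes a k y n r :: nat
  assumes "0 < n" "y < n" "a \<le> k" "k < a + n" "int r = (int y - int a) mod int n" "k mod n = y"
  shows "k = a + r"
proof -
  have "int k mod int n = int y" using assms by (metis of_nat_mod)
  then have "(int k - int a) mod int n = (int y - int a) mod int n"
    by (metis mod_diff_left_eq)
  moreover have "(int k - int a) mod int n = int k - int a" using assms(3,4) by simp
  ultimately show ?thesis using assms(5) by simp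
qed

lemma interval_one:
  assumes "0 < n" "y < n" "d \<le> n"
  shows "card {k. a \<le> k \<and> k < a + d \<and> k mod n = y} =
         (if (int y - int a) mod int n < int d then 1 else 0)"
proof -
  define r where "r = nat ((int y - int a) mod int n)"
  have r: "int r = (int y - int a) mod int n" using assms(1) by (simp add: r_def)
  have eqv: "((int y - int a) mod int n < int d) = (r < d)" by (simp add: r[symmetric])
  have "\<And>k. (a \<le> k \<and> k < a + d \<and> k mod n = y) \<longleftrightarrow> (r < d \<and> k = a + r)"
  proof
    fix k assume k: "a \<le> k \<and> k < a + d \<and> k mod n = y"
    then have "k < a + n" using assms(3) by simp
    then have "k = a + r" using mod_hit2[OF assms(1,2) _ _ r] k by blast
    then show "r < d \<and> k = a + r" using k by simp
  next
    fix k assume "r < d \<and> k = a + r"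
    then show "a \<le> k \<and> k < a + d \<and> k mod n = y" using mod_hit1[OF assms(1,2) r] by simp
  qed
  then have "{k. a \<le> k \<and> k < a + d \<and> k mod n = y} = (if r < d then {a + r} else {})"
    by auto
  then show ?thesis using eqv by simp
qed

lemma count_intervals:
  fixes d :: "nat \<Rightarrow> nat" and K :: nat
  assumes "0 < n" "y < n" "\<forall>i<K. d i \<le> n"
  shows "card {j. j < K \<and> (int y - int (\<Sum>i<j. d i)) mod int n < int (d j)} =
         card {k. k < (\<Sum>i<K. d i) \<and> k mod n = y}"
  using assms(3)
proof (induction K)
  case 0 then show ?case by simp
next
  case (Suc K)
  define P where "P j \<longleftrightarrow> (int y - int (\<Sum>i<j. d i)) mod int n < int (d j)" for j
  define H where "H = (\<Sum>i<K. d i)"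
  have IH: "card {j. j < K \<and> P j} = card {k. k < H \<and> k mod n = y}"
    using Suc unfolding P_def H_def by simp
  have s1: "{j. j < Suc K \<and> P j} = {j. j < K \<and> P j} \<union> {j. j = K \<and> P j}" by auto
  have c1: "card {j. j < Suc K \<and> P j} = card {j. j < K \<and> P j} + (if P K then 1 else 0)"
  proof -
    have "{j. j = K \<and> P j} = (if P K then {K} else {})" by auto
    then show ?thesis unfolding s1 by (subst card_Un_disjoint) auto
  qed
  have s2: "{k. k < H + d K \<and> k mod n = y} =
      {k. k < H \<and> k mod n = y} \<union> {k. H \<le> k \<and> k < H + d K \<and> k mod n = y}" by auto
  have c2: "card {k. k < H + d K \<and> k mod n = y} =
      card {k. k < H \<and> k mod n = y} + card {k. H \<le> k \<and> k < H + d K \<and> k mod n = y}"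
    unfolding s2 by (subst card_Un_disjoint) auto
  have c3: "card {k. H \<le> k \<and> k < H + d K \<and> k mod n = y} = (if P K then 1 else 0)"
    unfolding P_def H_def using interval_one[OF assms(1,2)] Suc.prems by simp
  show ?case using c1 c2 c3 IH unfolding P_def[symmetric] H_def by simp
qed

lemma count_mod:
  assumes "0 < n" "y < n"
  shows "card {k. k < D \<and> k mod n = y} = D div n + (if y < D mod n then 1 else 0)"
proof (induction D)
  case 0 then show ?case by simp
next
  case (Suc D)
  have s1: "{k. k < Suc D \<and> k mod n = y} = {k. k < D \<and> k mod n = y} \<union> {k. k = D \<and> k mod n = y}" by auto
  have c1: "card {k. k < Suc D \<and> k mod n = y} = card {k. k < D \<and> k mod n = y} + (if D mod n = y then 1 else 0)"
  proof -
    have "{k. k = D \<and> k mod n = y} = (if D mod n = y then {D} else {})" by auto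
    then show ?thesis unfolding s1 by (subst card_Un_disjoint) auto
  qed
  have lt: "D mod n < n" using assms by simp
  show ?case
  proof (cases "Suc (D mod n) = n")
    case True
    then have "Suc D mod n = 0" "Suc D div n = Suc (D div n)" by (simp_all add: mod_Suc div_Suc)
    then show ?thesis using c1 Suc.IH True assms by auto
  next
    case False
    then have "Suc D mod n = Suc (D mod n)" "Suc D div n = D div n" by (simp_all add: mod_Suc div_Suc)
    then show ?thesis using c1 Suc.IH False assms lt by auto
  qed
qed



theorem theorem9:
  fixes n s :: nat and ts :: "nat list list" and x :: nat
  assumes "1 \<le> n" and "1 \<le> s" and "s \<le> n"
    and "distinct ts" and "set ts = P_set n s"
    and "x \<in> {1..n}"
  shows "\<lfloor>real (n choose s) / real n\<rfloor> \<le> int (card (CV n s ts x)) \<and>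
         int (card (CV n s ts x)) \<le> \<lceil>real (n choose s) / real n\<rceil>"
proof -
  have n0: "0 < n" using assms by simp
  have x1: "1 \<le> x" "x \<le> n" using assms(6) by auto
  define K where "K = length ts"
  define dd where "dd i = dval n s (ts ! i)" for i
  define D where "D = (\<Sum>i<K. dd i)"
  define y where "y = x - 1"
  have yn: "y < n" using x1 y_def by simp
  have fE: "finite (E_set n s)" using finite_subset[OF E_sub finite_IA] .
  have AE: "A_set n s \<subseteq> E_set n s" unfolding A_set_def by auto
  have PE: "P_set n s \<subseteq> E_set n s" unfolding P_set_def by auto
  have AP: "A_set n s \<inter> P_set n s = {}" unfolding A_set_def P_set_def by auto
  have pl: "\<And>t. t \<in> E_set n s \<Longrightarrow> period t \<le> s"
  proof -
    fix t assume "t \<in> E_set n s"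
    then have "length t = s" unfolding E_char is_IA_def by simp
    moreover then have "t \<noteq> []" using assms(2) by auto
    ultimately show "period t \<le> s" using period_le by metis
  qed
  have EAP: "E_set n s = A_set n s \<union> P_set n s"
  proof
    show "E_set n s \<subseteq> A_set n s \<union> P_set n s"
    proof
      fix t assume t: "t \<in> E_set n s"
      then have "period t = s \<or> period t < s" using pl[OF t] by linarith
      then show "t \<in> A_set n s \<union> P_set n s" using t unfolding A_set_def P_set_def by blast
    qed
  qed (use AE PE in blast)
  have tsIA: "\<And>i. i < K \<Longrightarrow> ts ! i \<in> IA n s"
    using assms(5) PE E_sub K_def nth_mem by blast
  have dA: "\<And>t. t \<in> A_set n s \<Longrightarrow> dval n s t = n"
    unfolding A_set_def dval_def using assms(2) by simp
  have sumP: "(\<Sum>t\<in>P_set n s. dval n s t) = D"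
  proof -
    have "(\<Sum>t\<in>P_set n s. dval n s t) = sum_list (map (dval n s) ts)"
      using sum_list_distinct_conv_sum_set[OF assms(4), of "dval n s"] assms(5) by simp
    also have "\<dots> = (\<Sum>i = 0..<K. dval n s (ts ! i))" by (simp add: sum_list_sum_nth K_def)
    finally show ?thesis unfolding D_def dd_def by (simp add: atLeast0LessThan)
  qed
  have main: "n * card (A_set n s) + D = n choose s"
  proof -
    have "n choose s = (\<Sum>t\<in>E_set n s. dval n s t)" using sum_dval_E[OF assms(2,3)] by simp
    also have "\<dots> = (\<Sum>t\<in>A_set n s. dval n s t) + (\<Sum>t\<in>P_set n s. dval n s t)"
      unfolding EAP by (rule sum.union_disjoint) (use fE EAP AP in auto)
    also have "(\<Sum>t\<in>A_set n s. dval n s t) = n * card (A_set n s)" using dA by simp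
    finally show ?thesis using sumP by simp
  qed
  define f where "f t = coalition n x t" for t
  define J where "J = {j. j < K \<and> designated n s ts j x}"
  have injf: "inj_on f (IA n s)"
  proof (rule inj_onI)
    fix a b assume "a \<in> IA n s" "b \<in> IA n s" "f a = f b"
    then show "a = b" using coal_inj[of n s a b x] assms(2,3) x1 unfolding IA_def f_def by simp
  qed
  have CV1: "{coalition n x t | t. t \<in> A_set n s} = f ` A_set n s" unfolding f_def by blast
  have CV2: "{coalition n x (ts ! j) |j. j < length ts \<and> designated n s ts j x} = f ` ((!) ts ` J)"
    unfolding f_def J_def K_def by blast
  have CVeq: "CV n s ts x = f ` A_set n s \<union> f ` ((!) ts ` J)"
    unfolding CV_def CV1 CV2 ..
  have AIA: "A_set n s \<subseteq> IA n s" using AE E_sub by blast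
  have JIA: "(!) ts ` J \<subseteq> P_set n s" using assms(5) unfolding J_def K_def by auto
  have JIA': "(!) ts ` J \<subseteq> IA n s" using JIA PE E_sub by blast
  have fA: "finite (A_set n s)" using finite_subset[OF AIA finite_IA] .
  have fJ: "finite J" unfolding J_def by simp
  have c1: "card (f ` A_set n s) = card (A_set n s)"
    using card_image[OF inj_on_subset[OF injf AIA]] .
  have c2: "card (f ` ((!) ts ` J)) = card J"
  proof -
    have "card (f ` ((!) ts ` J)) = card ((!) ts ` J)" using card_image[OF inj_on_subset[OF injf JIA']] .
    also have "\<dots> = card J" by (rule card_image, rule inj_on_nth[OF assms(4)]) (simp add: J_def K_def)
    finally show ?thesis .
  qed
  have disj: "f ` A_set n s \<inter> f ` ((!) ts ` J) = {}"
  proof (rule ccontr)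
    assume "f ` A_set n s \<inter> f ` ((!) ts ` J) \<noteq> {}"
    then obtain a b where ab: "a \<in> A_set n s" "b \<in> (!) ts ` J" "f a = f b" by auto
    then have "a = b" using inj_onD[OF injf ab(3)] AIA JIA' by blast
    then show False using ab AP JIA by auto
  qed
  have cardCV: "card (CV n s ts x) = card (A_set n s) + card J"
    unfolding CVeq using card_Un_disjoint[OF finite_imageI[OF fA] finite_imageI[OF finite_imageI[OF fJ]] disj] c1 c2
    by simp
  have ddn: "\<forall>i<K. dd i \<le> n"
  proof (intro allI impI)
    fix i assume i: "i < K"
    have "ts ! i \<in> E_set n s" using i assms(5) PE K_def nth_mem by blast
    then have "period (ts ! i) \<le> s" by (rule pl)
    then have "n * period (ts ! i) \<le> n * s" by simp
    then have "n * period (ts ! i) div s \<le> n * s div s" by (rule div_le_mono)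
    then show "dd i \<le> n" unfolding dd_def dval_def using assms(2) by simp
  qed
  have Jeq: "J = {j. j < K \<and> (int y - int (\<Sum>i<j. dd i)) mod int n < int (dd j)}"
    unfolding J_def designated_def hval_def dd_def y_def using x1 by (simp add: of_nat_diff)
  have cJ: "card J = D div n + (if y < D mod n then 1 else 0)"
    unfolding Jeq count_intervals[OF n0 yn ddn] D_def[symmetric] count_mod[OF n0 yn] ..
  define Q where "Q = card (A_set n s) + D div n"
  define R where "R = D mod n"
  have bQ: "n choose s = n * Q + R"
  proof -
    have e: "n * Q = n * card (A_set n s) + n * (D div n)" by (simp add: Q_def add_mult_distrib2)
    show ?thesis using main e mult_div_mod_eq[of n D] R_def by linarith
  qed
  have Rn: "R < n" unfolding R_def using n0 by simp
  have cQ: "card (CV n s ts x) = Q + (if y < R then 1 else 0)" using cardCV cJ Q_def R_def by simp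
  have fl: "\<lfloor>real (n choose s) / real n\<rfloor> = int Q"
  proof -
    have "(n choose s) div n = Q" using bQ Rn n0 by simp
    then show ?thesis using floor_divide_of_nat_eq[of "n choose s" n] by simp
  qed
  have ce: "int Q \<le> \<lceil>real (n choose s) / real n\<rceil>"
    using fl floor_le_ceiling[of "real (n choose s) / real n"] by simp
  have ce2: "0 < R \<Longrightarrow> int Q < \<lceil>real (n choose s) / real n\<rceil>"
  proof -
    assume R0: "0 < R"
    have "real Q < real (n choose s) / real n"
    proof -
      have "n * Q < n choose s" using bQ R0 by simp
      then have "real (n * Q) < real (n choose s)" by (simp only: of_nat_less_iff)
      then have "real Q * real n < real (n choose s)" by (simp add: mult.commute)
      then show ?thesis using n0 by (simp add: field_simps)
    qed
    then show ?thesis by (simp add: less_ceiling_iff)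
  qed
  show ?thesis
  proof
    show "\<lfloor>real (n choose s) / real n\<rfloor> \<le> int (card (CV n s ts x))" using fl cQ by simp
    show "int (card (CV n s ts x)) \<le> \<lceil>real (n choose s) / real n\<rceil>"
    proof (cases "y < R")
      case True
      then have "0 < R" by simp
      then show ?thesis using ce2 cQ True by simp
    next
      case False
      then show ?thesis using ce cQ by simp
    qed
  qed
qed

end
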